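(* Let $V$ be a toroidal vertex algebra and let $I$ be an ideal of $V$. Define $$K(I)=\{v\in V\mid v_{m_0,\mathbf{m}}V\subset I\ \text{for all }(m_0,\mathbf{m})\in\mathbb{Z}\times\mathbb{Z}^r\},\qquad \mathcal{R}(I)=I\cap V^0,$$ and for an ideal $I^0$ of $V^0$ define $\mathcal{G}(I^0)=\mathrm{span}\{a_{m_0,\mathbf{m}}v\mid a\in I^0, v\in V,(m_0,\mathbf{m})\in\mathbb{Z}\times\mathbb{Z}^r\}$ (an ideal of $V$). Then $$K(\mathcal{G}(\mathcal{R}(I)))=K(I)\quad\text{and}\quad \mathcal{R}(I)=\mathcal{R}(K(I)).$$
   Context: Fix a positive integer $r$. Write $\mathbf{x}=(x_1,\dots,x_r)$, $\mathbf{x}^{\mathbf{m}}=x_1^{m_1}\cdots x_r^{m_r}$ (similarly for other variables), $\mathbf{z}\mathbf{y}=(z_1y_1,\dots,z_ry_r)$. For a vector space $W$ put $\mathcal{E}(W,r)=\mathrm{Hom}(W,W[[x_1^{\pm1},\dots,x_r^{\pm1}]]((x_0)))$. A toroidal vertex algebra is a vector space $V$ with a linear map $Y(\cdot;x_0,\mathbf{x}):V\to\mathcal{E}(V,r)$, $v\mapsto\sum_{(m_0,\mathbf{m})\in\mathbb{Z}\times\mathbb{Z}^r}v_{m_0,\mathbf{m}}x_0^{-m_0-1}\mathbf{x}^{-\mathbf{m}}$, and a vector $\mathbf{1}$ with $Y(\mathbf{1};x_0,\mathbf{x})v=v$, $Y(v;x_0,\mathbf{x})\mathbf{1}\in V[[x_0,x_1^{\pm1},\dots,x_r^{\pm1}]]$,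 and the Jacobi identity $$z_0^{-1}\delta\!\left(\tfrac{x_0-y_0}{z_0}\right)Y(u;x_0,\mathbf{z}\mathbf{y})Y(v;y_0,\mathbf{y})-z_0^{-1}\delta\!\left(\tfrac{y_0-x_0}{-z_0}\right)Y(v;y_0,\mathbf{y})Y(u;x_0,\mathbf{z}\mathbf{y})=y_0^{-1}\delta\!\left(\tfrac{x_0-z_0}{y_0}\right)Y(Y(u;z_0,\mathbf{z})v;y_0,\mathbf{y})$$ for all $u,v$, where $Y(u;x_0,\mathbf{z}\mathbf{y})=\sum u_{m_0,\mathbf{m}}x_0^{-m_0-1}\mathbf{z}^{-\mathbf{m}}\mathbf{y}^{-\mathbf{m}}$. An ideal of $V$ is a subspace $I$ with $u_{m_0,\mathbf{m}}v\in I$ whenever $u\in I$ or $v\in I$. $V^0=\mathrm{span}\{v_{m_0,\mathbf{m}}\mathbf{1}\}$ is a toroidal vertex subalgebra; $\mathcal{R}(I)$ is an ideal of $V^0$. *)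

theory Defs
  imports Complex_Main "HOL-Library.Groups_Big_Fun"
begin

text \<open>A toroidal vertex algebra over a field 'k, with underlying vector space the
type 'v (scalar multiplication scale), and r = CARD('r).  The vertex operator
is given by its modes: Y u m0 m v is the coefficient u_(m0,m) v of
x0^(-m0-1) x^(-m) in Y(u;x0,x)v.  The Jacobi identity is stated via its
coefficient of z0^(-p-1) x0^(-s-1) y0^(-t-1) z^(-m) y^(-m-n) applied to w,
the delta functions being expanded as usual (binomial expansion in the
second variable).\<close>

text \<open>Generalised binomial coefficient (p choose k) for an integer p; the
division is exact.\<close>
definition int_binom :: "int \<Rightarrow> nat \<Rightarrow> int" where
  "int_binom p k = (\<Prod>i<k. p - int i) div fact k"

definition toroidal_VA ::
  "('k::field \<Rightarrow> 'v::ab_group_add \<Rightarrow> 'v) \<Rightarrow>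
   ('v \<Rightarrow> int \<Rightarrow> ('r::finite \<Rightarrow> int) \<Rightarrow> 'v \<Rightarrow> 'v) \<Rightarrow> 'v \<Rightarrow> bool" where
  "toroidal_VA scale Y one \<longleftrightarrow>
     vector_space scale \<and>
     (\<forall>u m0 m. Vector_Spaces.linear scale scale (Y u m0 m)) \<and>
     (\<forall>v m0 m. Vector_Spaces.linear scale scale (\<lambda>u. Y u m0 m v)) \<and>
     \<comment> \<open>Y(u;x0,x)v lies in V[[x1^(+-1),...,xr^(+-1)]]((x0))\<close>
     (\<forall>u v. \<exists>N. \<forall>m0\<ge>N. \<forall>m. Y u m0 m v = 0) \<and>
     \<comment> \<open>vacuum: Y(1;x0,x)v = v\<close>
     (\<forall>v m0 m. Y one m0 m v = (if m0 = -1 \<and> m = (\<lambda>_. 0) then v else 0)) \<and>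
     \<comment> \<open>creation: Y(v;x0,x)1 in V[[x0,x^(+-1)]]\<close>
     (\<forall>v m0 m. m0 \<ge> 0 \<longrightarrow> Y v m0 m one = 0) \<and>
     \<comment> \<open>Jacobi identity, componentwise\<close>
     (\<forall>u v w p s t m n.
        (\<Sum>j. scale (of_int (int_binom s j))
                 (Y (Y u (p + int j) m v) (s + t - int j) (\<lambda>i. m i + n i) w))
        = (\<Sum>i. scale (of_int ((-1) ^ i * int_binom p i))
                 (Y u (s + p - int i) m (Y v (t + int i) n w)))
          - scale (if even p then 1 else -1)
             (\<Sum>i. scale (of_int ((-1) ^ i * int_binom p i))
                 (Y v (t + p - int i) n (Y u (s + int i) m w))))"

definition tva_ideal ::
  "('k::field \<Rightarrow> 'v::ab_group_add \<Rightarrow> 'v) \<Rightarrow>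
   ('v \<Rightarrow> int \<Rightarrow> ('r::finite \<Rightarrow> int) \<Rightarrow> 'v \<Rightarrow> 'v) \<Rightarrow> 'v set \<Rightarrow> bool" where
  "tva_ideal scale Y I \<longleftrightarrow> module.subspace scale I \<and>
     (\<forall>u v m0 m. (u \<in> I \<or> v \<in> I) \<longrightarrow> Y u m0 m v \<in> I)"

definition tva_V0 ::
  "('k::field \<Rightarrow> 'v::ab_group_add \<Rightarrow> 'v) \<Rightarrow>
   ('v \<Rightarrow> int \<Rightarrow> ('r::finite \<Rightarrow> int) \<Rightarrow> 'v \<Rightarrow> 'v) \<Rightarrow> 'v \<Rightarrow> 'v set" where
  "tva_V0 scale Y one = module.span scale {Y v m0 m one | v m0 m. True}"

definition tva_K ::
  "('v \<Rightarrow> int \<Rightarrow> ('r::finite \<Rightarrow> int) \<Rightarrow> 'v \<Rightarrow> 'v) \<Rightarrow> 'v set \<Rightarrow> 'v set" where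
  "tva_K Y I = {v. \<forall>m0 m w. Y v m0 m w \<in> I}"

definition tva_R ::
  "('k::field \<Rightarrow> 'v::ab_group_add \<Rightarrow> 'v) \<Rightarrow>
   ('v \<Rightarrow> int \<Rightarrow> ('r::finite \<Rightarrow> int) \<Rightarrow> 'v \<Rightarrow> 'v) \<Rightarrow> 'v \<Rightarrow> 'v set \<Rightarrow> 'v set" where
  "tva_R scale Y one I = I \<inter> tva_V0 scale Y one"

definition tva_G ::
  "('k::field \<Rightarrow> 'v::ab_group_add \<Rightarrow> 'v) \<Rightarrow>
   ('v \<Rightarrow> int \<Rightarrow> ('r::finite \<Rightarrow> int) \<Rightarrow> 'v \<Rightarrow> 'v) \<Rightarrow> 'v set \<Rightarrow> 'v set" where
  "tva_G scale Y I0 = module.span scale {Y a m0 m v | a v m0 m. a \<in> I0}"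

end

theory Submission
  imports Defs
begin

lemma lin_props:
  assumes "Vector_Spaces.linear s s f"
  shows "f 0 = 0" "f (x + y) = f x + f y" "f (s c x) = s c (f x)"
proof -
  have a: "\<And>x y. f (x + y) = f x + f y" and b: "\<And>c x. f (s c x) = s c (f x)"
    using assms unfolding Vector_Spaces.linear_iff by auto
  have "f (0 + 0) = f 0 + f 0" by (rule a)
  then show "f 0 = 0" by simp
  show "f (x + y) = f x + f y" "f (s c x) = s c (f x)" by (rule a, rule b)
qed

lemma ib0: "int_binom p 0 = 1"
  by (simp add: int_binom_def)

lemma ib_zero: "j > 0 \<Longrightarrow> int_binom 0 j = 0"
proof -
  assume "j > 0"
  then have e: "(\<Prod>i<j. (0::int) - int i) = 0"
    by (intro prod_zero) auto
  show ?thesis unfolding int_binom_def e by simp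
qed

lemma key1:
  assumes V: "toroidal_VA scale Y one"
  shows "Y (Y u (-1) m one) k m w = Y u k m w"
proof -
  have vs: "vector_space scale" and linY: "\<And>u m0 m. Vector_Spaces.linear scale scale (Y u m0 m)"
    and linY2: "\<And>v m0 m. Vector_Spaces.linear scale scale (\<lambda>u. Y u m0 m v)"
    and vac: "\<And>v m0 m. Y one m0 m v = (if m0 = -1 \<and> m = (\<lambda>_. 0) then v else 0)"
    and cre: "\<And>v m0 m. m0 \<ge> 0 \<Longrightarrow> Y v m0 m one = 0"
    and J: "\<And>u v w p s t m n.
        (\<Sum>j. scale (of_int (int_binom s j))
                 (Y (Y u (p + int j) m v) (s + t - int j) (\<lambda>i. m i + n i) w))
        = (\<Sum>i. scale (of_int ((-1) ^ i * int_binom p i))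
                 (Y u (s + p - int i) m (Y v (t + int i) n w)))
          - scale (if even p then 1 else -1)
             (\<Sum>i. scale (of_int ((-1) ^ i * int_binom p i))
                 (Y v (t + p - int i) n (Y u (s + int i) m w)))"
    using V unfolding toroidal_VA_def by auto
  interpret vector_space scale by (rule vs)
  have Y0: "\<And>m0 m v. Y 0 m0 m v = 0" using lin_props(1)[OF linY2] by blast
  have Yz: "\<And>u m0 m. Y u m0 m 0 = 0" using lin_props(1)[OF linY] by blast
  note J1 = J[where u=u and v=one and w=w and p="-1" and s="k+1" and t="-1" and m=m and n="\<lambda>_. 0"]
  have L: "\<And>j. scale (of_int (int_binom (k+1) j))
                 (Y (Y u (-1 + int j) m one) (k + 1 + -1 - int j) (\<lambda>i. m i + 0) w)
         = (if j = 0 then Y (Y u (-1) m one) k m w else 0)"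
    by (auto simp: ib0 cre Y0)
  have R1: "\<And>i. scale (of_int ((-1) ^ i * int_binom (-1) i))
                 (Y u (k + 1 + -1 - int i) m (Y one (-1 + int i) (\<lambda>_. 0) w))
          = (if i = 0 then Y u k m w else 0)"
    by (auto simp: ib0 vac Yz)
  have R2: "\<And>i. scale (of_int ((-1) ^ i * int_binom (-1) i))
                 (Y one (-1 + -1 - int i) (\<lambda>_. 0) (Y u (k + 1 + int i) m w)) = 0"
    by (auto simp: vac)
  show ?thesis using J1 unfolding L R1 R2 by simp
qed

lemma key2:
  assumes V: "toroidal_VA scale Y one"
  shows "Y (Y a k m one) (-1) m' one = (if m' = m then Y a k m one else 0)"
proof -
  have vs: "vector_space scale" and linY: "\<And>u m0 m. Vector_Spaces.linear scale scale (Y u m0 m)"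
    and linY2: "\<And>v m0 m. Vector_Spaces.linear scale scale (\<lambda>u. Y u m0 m v)"
    and vac: "\<And>v m0 m. Y one m0 m v = (if m0 = -1 \<and> m = (\<lambda>_. 0) then v else 0)"
    and cre: "\<And>v m0 m. m0 \<ge> 0 \<Longrightarrow> Y v m0 m one = 0"
    and J: "\<And>u v w p s t m n.
        (\<Sum>j. scale (of_int (int_binom s j))
                 (Y (Y u (p + int j) m v) (s + t - int j) (\<lambda>i. m i + n i) w))
        = (\<Sum>i. scale (of_int ((-1) ^ i * int_binom p i))
                 (Y u (s + p - int i) m (Y v (t + int i) n w)))
          - scale (if even p then 1 else -1)
             (\<Sum>i. scale (of_int ((-1) ^ i * int_binom p i))
                 (Y v (t + p - int i) n (Y u (s + int i) m w)))"
    using V unfolding toroidal_VA_def by auto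
  interpret vector_space scale by (rule vs)
  have Y0: "\<And>m0 m v. Y 0 m0 m v = 0" using lin_props(1)[OF linY2] by blast
  have Yz: "\<And>u m0 m. Y u m0 m 0 = 0" using lin_props(1)[OF linY] by blast
  define n where "n = (\<lambda>i. m' i - m i)"
  have mn: "(\<lambda>i. m i + n i) = m'" by (simp add: n_def)
  have n0: "(n = (\<lambda>_. 0)) = (m' = m)" by (auto simp: n_def fun_eq_iff)
  note J1 = J[where u=a and v=one and w=one and p=k and s=0 and t="-1" and m=m and n=n]
  have L: "\<And>j. scale (of_int (int_binom 0 j))
                 (Y (Y a (k + int j) m one) (0 + -1 - int j) (\<lambda>i. m i + n i) one)
         = (if j = 0 then Y (Y a k m one) (-1) m' one else 0)"
    by (auto simp: ib0 ib_zero mn)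
  have R1: "\<And>i. scale (of_int ((-1) ^ i * int_binom k i))
                 (Y a (0 + k - int i) m (Y one (-1 + int i) n one))
          = (if i = 0 then (if m' = m then Y a k m one else 0) else 0)"
    by (auto simp: ib0 vac Yz n0)
  have R2: "\<And>i. scale (of_int ((-1) ^ i * int_binom k i))
                 (Y one (-1 + k - int i) n (Y a (0 + int i) m one)) = 0"
    by (auto simp: cre Yz)
  show ?thesis using J1 unfolding L R1 R2 by simp
qed

lemma V0_decomp:
  assumes V: "toroidal_VA scale Y one" and v: "v \<in> tva_V0 scale Y one"
  shows "\<exists>F. finite F \<and> v = sum (\<lambda>m. Y v (-1) m one) F"
proof -
  have vs: "vector_space scale" and linY: "\<And>u m0 m. Vector_Spaces.linear scale scale (Y u m0 m)"
    and linY2: "\<And>v m0 m. Vector_Spaces.linear scale scale (\<lambda>u. Y u m0 m v)"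
    using V unfolding toroidal_VA_def by auto
  interpret vector_space scale by (rule vs)
  let ?P = "\<lambda>v. \<exists>F. finite F \<and> (\<forall>m. m \<notin> F \<longrightarrow> Y v (-1) m one = 0) \<and> v = sum (\<lambda>m. Y v (-1) m one) F"
  have "?P v" using v unfolding tva_V0_def
  proof (induction rule: span_induct)
    case base
    show ?case
    proof (rule subspaceI)
      show "0 \<in> Collect ?P"
        by (rule CollectI, rule exI[of _ "{}"]) (simp add: lin_props(1)[OF linY2])
    next
      fix x y assume "x \<in> Collect ?P" "y \<in> Collect ?P"
      then obtain F G where F: "finite F" "\<forall>m. m \<notin> F \<longrightarrow> Y x (-1) m one = 0"
          "x = sum (\<lambda>m. Y x (-1) m one) F"
        and G: "finite G" "\<forall>m. m \<notin> G \<longrightarrow> Y y (-1) m one = 0"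
          "y = sum (\<lambda>m. Y y (-1) m one) G" by auto
      have add: "\<And>m. Y (x + y) (-1) m one = Y x (-1) m one + Y y (-1) m one"
        using lin_props(2)[OF linY2] by blast
      have sx: "sum (\<lambda>m. Y x (-1) m one) (F \<union> G) = x"
        using F G(1) by (subst sum.mono_neutral_right[of "F \<union> G" F]) auto
      have sy: "sum (\<lambda>m. Y y (-1) m one) (F \<union> G) = y"
        using G F(1) by (subst sum.mono_neutral_right[of "F \<union> G" G]) auto
      show "x + y \<in> Collect ?P"
        apply (rule CollectI, rule exI[of _ "F \<union> G"])
        using F G sx sy by (simp add: add sum.distrib)
    next
      fix c x assume "x \<in> Collect ?P"
      then obtain F where F: "finite F" "\<forall>m. m \<notin> F \<longrightarrow> Y x (-1) m one = 0"
          "x = sum (\<lambda>m. Y x (-1) m one) F" by auto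
      have sc: "\<And>m. Y (scale c x) (-1) m one = scale c (Y x (-1) m one)"
        using lin_props(3)[OF linY2] by blast
      have e: "scale c x = sum (\<lambda>m. scale c (Y x (-1) m one)) F"
        using F(3) scale_sum_right by metis
      show "scale c x \<in> Collect ?P"
        apply (rule CollectI, rule exI[of _ F])
        unfolding sc using F(1,2) e by simp
    qed
  next
    case (step x)
    then obtain a k m where x: "x = Y a k m one" by auto
    show ?case
      by (rule exI[of _ "{m}"]) (simp add: x key2[OF V])
  qed
  then show ?thesis by blast
qed

theorem proposition2p21:
  fixes scale :: "'k::field \<Rightarrow> 'v::ab_group_add \<Rightarrow> 'v"
    and Y :: "'v \<Rightarrow> int \<Rightarrow> ('r::finite \<Rightarrow> int) \<Rightarrow> 'v \<Rightarrow> 'v"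
    and one :: 'v
    and I :: "'v set"
  assumes "toroidal_VA scale Y one"
    and "tva_ideal scale Y I"
  shows "tva_K Y (tva_G scale Y (tva_R scale Y one I)) = tva_K Y I
       \<and> tva_R scale Y one I = tva_R scale Y one (tva_K Y I)"
proof -
  note V = assms(1)
  have vs: "vector_space scale" using V unfolding toroidal_VA_def by auto
  interpret vector_space scale by (rule vs)
  have sI: "subspace I" and idI: "\<And>u v m0 m. u \<in> I \<or> v \<in> I \<Longrightarrow> Y u m0 m v \<in> I"
    using assms(2) unfolding tva_ideal_def by auto
  have GI: "tva_G scale Y (tva_R scale Y one I) \<subseteq> I"
    unfolding tva_G_def tva_R_def
    by (rule span_minimal[OF _ sI]) (auto intro: idI)
  have 1: "tva_K Y (tva_G scale Y (tva_R scale Y one I)) = tva_K Y I"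
  proof
    show "tva_K Y (tva_G scale Y (tva_R scale Y one I)) \<subseteq> tva_K Y I"
      using GI unfolding tva_K_def by blast
  next
    show "tva_K Y I \<subseteq> tva_K Y (tva_G scale Y (tva_R scale Y one I))"
    proof
      fix v assume v: "v \<in> tva_K Y I"
      show "v \<in> tva_K Y (tva_G scale Y (tva_R scale Y one I))"
        unfolding tva_K_def
      proof (intro CollectI allI)
        fix k m w
        have a: "Y v (-1) m one \<in> tva_R scale Y one I"
          using v unfolding tva_K_def tva_R_def tva_V0_def by (auto intro: span_base)
        show "Y v k m w \<in> tva_G scale Y (tva_R scale Y one I)"
          unfolding key1[OF V, of v m k w, symmetric] tva_G_def
          using a by (auto intro!: span_base)
      qed
    qed
  qed
  have 2: "tva_R scale Y one I = tva_R scale Y one (tva_K Y I)"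
  proof
    show "tva_R scale Y one I \<subseteq> tva_R scale Y one (tva_K Y I)"
      unfolding tva_R_def tva_K_def using idI by blast
  next
    show "tva_R scale Y one (tva_K Y I) \<subseteq> tva_R scale Y one I"
    proof
      fix v assume v: "v \<in> tva_R scale Y one (tva_K Y I)"
      then have v0: "v \<in> tva_V0 scale Y one" and vK: "\<And>k m w. Y v k m w \<in> I"
        unfolding tva_R_def tva_K_def by auto
      obtain F where "finite F" "v = sum (\<lambda>m. Y v (-1) m one) F"
        using V0_decomp[OF V v0] by blast
      then have "v \<in> I" using subspace_sum[OF sI] vK by metis
      then show "v \<in> tva_R scale Y one I" using v0 unfolding tva_R_def by blast
    qed
  qed
  show ?thesis using 1 2 by blast
qed

end
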